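(* Let $D$ be a tournament missing disjoint paths of length 2, and let $C=a_1b_1c_1,\dots,a_kb_kc_k$ be a double cycle in $\Delta(D)$. Then there exists $t\in\{1,\dots,k\}$ such that $|N^+_{D[K(C)]}(b_t)|\le|N^{++}_{D[K(C)]}(b_t)|$.
   Context: All digraphs are finite oriented graphs; $D[X]$ is the subdigraph induced by $X$. $N^+_H(v)$ is the out-neighborhood in $H$; $N^{++}_H(v)$ is the set of vertices $w\notin N_H^+(v)\cup\{v\}$ with $u\to w$ in $H$ for some $u\in N_H^+(v)$. A missing edge is a pair of distinct non-adjacent vertices; the missing graph is formed by the missing edges. $D$ is a tournament missing disjoint paths of length 2 if its missing graph is a vertex-disjoint union of paths each with exactly two edges. For missing edges $\{x,y\},\{a,b\}$, $\{x,y\}$ loses to $\{a,b\}$ (written $xy\to ab$) if the endpoints can be labelled so that $x\to a$, $b\notin N^+(x)\cup N^{++}(x)$, $y\to b$, $a\notin N^+(y)\cup N^{++}(y)$ (neighborhoods in $D$). $\Delta(D)$ has the missing edges as vertices and arcs $(e,e')$ whenever $e$ loses to $e'$. For missing paths $abc$, $xyz$ (edges $ab,bc$ and $xy,yz$), $abc\to xyz$ means each of $ab,bc$ loses to each of $xy,yz$. A double cycle is a sequence $C=a_1b_1c_1,\dots,a_kb_kc_k$ ($k\ge2$) of distinct missing paths of length 2 (components of the missing graph) with $a_ib_ic_i\to a_{i+1}b_{i+1}c_{i+1}$ for all $i$, indices modulo $k$. $K(C)=\{a_i,b_i,c_i: 1\le i\le k\}$. *)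

theory Defs
  imports Main
begin

definition oriented_graph :: "'a set \<Rightarrow> ('a \<Rightarrow> 'a \<Rightarrow> bool) \<Rightarrow> bool" where
  "oriented_graph V arc \<longleftrightarrow> finite V
     \<and> (\<forall>u v. arc u v \<longrightarrow> u \<in> V \<and> v \<in> V)
     \<and> (\<forall>u. \<not> arc u u)
     \<and> (\<forall>u v. arc u v \<longrightarrow> \<not> arc v u)"

definition outN :: "('a \<Rightarrow> 'a \<Rightarrow> bool) \<Rightarrow> 'a set \<Rightarrow> 'a \<Rightarrow> 'a set" where
  "outN arc X v = {w \<in> X. arc v w}"

definition outN2 :: "('a \<Rightarrow> 'a \<Rightarrow> bool) \<Rightarrow> 'a set \<Rightarrow> 'a \<Rightarrow> 'a set" where
  "outN2 arc X v = {w \<in> X. w \<notin> outN arc X v \<and> w \<noteq> v \<and> (\<exists>u \<in> outN arc X v. arc u w)}"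

definition missing :: "'a set \<Rightarrow> ('a \<Rightarrow> 'a \<Rightarrow> bool) \<Rightarrow> 'a \<Rightarrow> 'a \<Rightarrow> bool" where
  "missing V arc x y \<longleftrightarrow> x \<in> V \<and> y \<in> V \<and> x \<noteq> y \<and> \<not> arc x y \<and> \<not> arc y x"

definition missN :: "'a set \<Rightarrow> ('a \<Rightarrow> 'a \<Rightarrow> bool) \<Rightarrow> 'a \<Rightarrow> 'a set" where
  "missN V arc v = {w. missing V arc v w}"

text \<open>a b c is a component of the missing graph which is a path with edges ab, bc.\<close>
definition missing_path :: "'a set \<Rightarrow> ('a \<Rightarrow> 'a \<Rightarrow> bool) \<Rightarrow> 'a \<Rightarrow> 'a \<Rightarrow> 'a \<Rightarrow> bool" where
  "missing_path V arc a b c \<longleftrightarrow> a \<noteq> b \<and> b \<noteq> c \<and> a \<noteq> c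
     \<and> missN V arc a = {b} \<and> missN V arc b = {a, c} \<and> missN V arc c = {b}"

text \<open>D is a tournament missing disjoint paths of length 2: the missing graph is a
  vertex-disjoint union of paths with exactly two edges, i.e. every vertex incident to a
  missing edge lies on such a component.\<close>
definition tournament_missing_P2 :: "'a set \<Rightarrow> ('a \<Rightarrow> 'a \<Rightarrow> bool) \<Rightarrow> bool" where
  "tournament_missing_P2 V arc \<longleftrightarrow> oriented_graph V arc
     \<and> (\<forall>v. missN V arc v \<noteq> {} \<longrightarrow>
           (\<exists>a b c. missing_path V arc a b c \<and> v \<in> {a, b, c}))"

text \<open>Labelled losing condition (neighbourhoods taken in D itself).\<close>
definition loses_lab :: "'a set \<Rightarrow> ('a \<Rightarrow> 'a \<Rightarrow> bool) \<Rightarrow> 'a \<Rightarrow> 'a \<Rightarrow> 'a \<Rightarrow> 'a \<Rightarrow> bool" where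
  "loses_lab V arc x y a b \<longleftrightarrow>
     arc x a \<and> b \<notin> outN arc V x \<union> outN2 arc V x
     \<and> arc y b \<and> a \<notin> outN arc V y \<union> outN2 arc V y"

definition loses :: "'a set \<Rightarrow> ('a \<Rightarrow> 'a \<Rightarrow> bool) \<Rightarrow> 'a set \<Rightarrow> 'a set \<Rightarrow> bool" where
  "loses V arc e e' \<longleftrightarrow> (\<exists>x y a b. e = {x, y} \<and> e' = {a, b}
       \<and> missing V arc x y \<and> missing V arc a b \<and> loses_lab V arc x y a b)"

definition path_loses :: "'a set \<Rightarrow> ('a \<Rightarrow> 'a \<Rightarrow> bool) \<Rightarrow> 'a \<Rightarrow> 'a \<Rightarrow> 'a \<Rightarrow> 'a \<Rightarrow> 'a \<Rightarrow> 'a \<Rightarrow> bool" where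
  "path_loses V arc a b c x y z \<longleftrightarrow>
     (\<forall>e \<in> {{a, b}, {b, c}}. \<forall>e' \<in> {{x, y}, {y, z}}. loses V arc e e')"

text \<open>Double cycle a_i b_i c_i, indices i < k (0-based), successor (i+1) mod k.\<close>
definition double_cycle :: "'a set \<Rightarrow> ('a \<Rightarrow> 'a \<Rightarrow> bool) \<Rightarrow> nat \<Rightarrow>
     (nat \<Rightarrow> 'a) \<Rightarrow> (nat \<Rightarrow> 'a) \<Rightarrow> (nat \<Rightarrow> 'a) \<Rightarrow> bool" where
  "double_cycle V arc k a b c \<longleftrightarrow> k \<ge> 2
     \<and> (\<forall>i < k. missing_path V arc (a i) (b i) (c i))
     \<and> (\<forall>i < k. \<forall>j < k. i \<noteq> j \<longrightarrow> {a i, b i, c i} \<noteq> {a j, b j, c j})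
     \<and> (\<forall>i < k. path_loses V arc (a i) (b i) (c i)
                  (a ((i + 1) mod k)) (b ((i + 1) mod k)) (c ((i + 1) mod k)))"

definition KC :: "nat \<Rightarrow> (nat \<Rightarrow> 'a) \<Rightarrow> (nat \<Rightarrow> 'a) \<Rightarrow> (nat \<Rightarrow> 'a) \<Rightarrow> 'a set" where
  "KC k a b c = (\<Union>i < k. {a i, b i, c i})"

end

theory Submission imports Defs begin

definition eps :: "nat \<Rightarrow> bool" where "eps r = (r \<noteq> 1)"

lemma lab4:
  assumes L: "loses_lab V arc x y p q"
    and ad: "arc q x \<or> arc x q" "arc p y \<or> arc y p"
    and dq: "q \<noteq> x" and dp: "p \<noteq> y"
    and aV: "\<And>u v. arc u v \<Longrightarrow> u \<in> V \<and> v \<in> V"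
  shows "arc x p \<and> arc p y \<and> arc y q \<and> arc q x \<and> (\<forall>z. arc x z \<longrightarrow> \<not> arc z q)
         \<and> (\<forall>z. arc y z \<longrightarrow> \<not> arc z p)"
proof -
  have qV: "q \<in> V" using ad(1) aV by blast
  have pV: "p \<in> V" using ad(2) aV by blast
  from L have 1: "arc x p" "arc y q" "q \<notin> outN arc V x" "q \<notin> outN2 arc V x"
     "p \<notin> outN arc V y" "p \<notin> outN2 arc V y"
    unfolding loses_lab_def by auto
  have n1: "\<not> arc x q" using 1(3) qV unfolding outN_def by auto
  have n2: "\<not> arc y p" using 1(5) pV unfolding outN_def by auto
  have z1: "\<forall>z. arc x z \<longrightarrow> \<not> arc z q" using 1(4) n1 qV dq aV unfolding outN2_def outN_def by blast
  have z2: "\<forall>z. arc y z \<longrightarrow> \<not> arc z p" using 1(6) n2 pV dp aV unfolding outN2_def outN_def by blast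
  show ?thesis using 1(1,2) n1 n2 z1 z2 ad by blast
qed

lemma lose4:
  assumes L: "loses V arc {x,y} {p,q}"
    and d: "x \<noteq> y" "p \<noteq> q" "x \<noteq> p" "x \<noteq> q" "y \<noteq> p" "y \<noteq> q"
    and ad: "\<And>u v. u \<in> {x,y} \<Longrightarrow> v \<in> {p,q} \<Longrightarrow> arc u v \<or> arc v u"
    and aV: "\<And>u v. arc u v \<Longrightarrow> u \<in> V \<and> v \<in> V"
    and asy: "\<And>u v. arc u v \<Longrightarrow> \<not> arc v u"
  shows "(arc x p \<longleftrightarrow> arc y q) \<and> (arc x p \<longleftrightarrow> \<not> arc x q) \<and> (arc x p \<longleftrightarrow> \<not> arc y p)
     \<and> (\<forall>u\<in>{x,y}. \<forall>v\<in>{p,q}. arc v u \<longrightarrow> (\<forall>z. arc u z \<longrightarrow> \<not> arc z v))"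
proof -
  obtain x' y' p' q' where e: "{x,y} = {x',y'}" "{p,q} = {p',q'}" and Lab: "loses_lab V arc x' y' p' q'"
    using L unfolding loses_def by blast
  from e d have c1: "(x'=x \<and> y'=y) \<or> (x'=y \<and> y'=x)" by (auto simp: doubleton_eq_iff)
  from e d have c2: "(p'=p \<and> q'=q) \<or> (p'=q \<and> q'=p)" by (auto simp: doubleton_eq_iff)
  have ad': "arc q' x' \<or> arc x' q'" "arc p' y' \<or> arc y' p'" using c1 c2 ad by blast+
  have dd: "q' \<noteq> x'" "p' \<noteq> y'" using c1 c2 d by auto
  have R: "arc x' p' \<and> arc p' y' \<and> arc y' q' \<and> arc q' x' \<and> (\<forall>z. arc x' z \<longrightarrow> \<not> arc z q')
         \<and> (\<forall>z. arc y' z \<longrightarrow> \<not> arc z p')"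
    using lab4[OF Lab ad' dd aV] by blast
  show ?thesis using c1 c2 R asy by blast
qed

locale DC =
  fixes V :: "'a set" and arc :: "'a \<Rightarrow> 'a \<Rightarrow> bool" and k :: nat and a b c :: "nat \<Rightarrow> 'a"
  assumes tm: "tournament_missing_P2 V arc" and dc: "double_cycle V arc k a b c"
begin

definition w :: "nat \<Rightarrow> nat \<Rightarrow> 'a" where
  "w i r = (if r = 0 then a i else if r = 1 then b i else c i)"

definition nx :: "nat \<Rightarrow> nat" where "nx i = (i + 1) mod k"

lemma w_simps[simp]: "w i 0 = a i" "w i 1 = b i" "w i (Suc 0) = b i" "w i (Suc (Suc 0)) = c i" "w i 2 = c i"
  by (auto simp: w_def)

lemma og: "oriented_graph V arc" using tm unfolding tournament_missing_P2_def by simp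
lemma aV: "arc u v \<Longrightarrow> u \<in> V \<and> v \<in> V" using og unfolding oriented_graph_def by blast
lemma irr: "\<not> arc u u" using og unfolding oriented_graph_def by blast
lemma asy: "arc u v \<Longrightarrow> \<not> arc v u" using og unfolding oriented_graph_def by blast
lemma k2: "k \<ge> 2" using dc unfolding double_cycle_def by simp
lemma mp: "i < k \<Longrightarrow> missing_path V arc (a i) (b i) (c i)" using dc unfolding double_cycle_def by simp
lemma pne: "i < k \<Longrightarrow> j < k \<Longrightarrow> i \<noteq> j \<Longrightarrow> {a i, b i, c i} \<noteq> {a j, b j, c j}"
  using dc unfolding double_cycle_def by simp
lemma pl: "i < k \<Longrightarrow> path_loses V arc (a i) (b i) (c i) (a (nx i)) (b (nx i)) (c (nx i))"
  using dc unfolding double_cycle_def nx_def by simp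

lemma mN: assumes "i < k"
  shows "missN V arc (a i) = {b i}" "missN V arc (b i) = {a i, c i}" "missN V arc (c i) = {b i}"
    "a i \<noteq> b i" "b i \<noteq> c i" "a i \<noteq> c i"
  using mp[OF assms] unfolding missing_path_def by auto

lemma mis: "missing V arc x y \<longleftrightarrow> y \<in> missN V arc x" unfolding missN_def by simp

lemma mis_ab: assumes "i < k" shows "missing V arc (a i) (b i)" "missing V arc (c i) (b i)"
  using mN[OF assms] mis by auto

lemma noarc: assumes "i < k"
  shows "\<not> arc (a i) (b i)" "\<not> arc (b i) (a i)" "\<not> arc (c i) (b i)" "\<not> arc (b i) (c i)"
  using mis_ab[OF assms] unfolding missing_def by auto

lemma inV: assumes "i < k" shows "a i \<in> V" "b i \<in> V" "c i \<in> V"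
  using mis_ab[OF assms] unfolding missing_def by auto

lemma r3: "r < (3::nat) \<Longrightarrow> r = 0 \<or> r = 1 \<or> r = 2" by auto

lemma wV: "i < k \<Longrightarrow> r < 3 \<Longrightarrow> w i r \<in> V"
  using inV r3 by (auto simp: w_def)

lemma same_idx: assumes "i < k" "j < k" "v \<in> {a i, b i, c i}" "v \<in> {a j, b j, c j}" shows "i = j"
proof (rule ccontr)
  assume ij: "i \<noteq> j"
  note A = mN[OF assms(1)] and B = mN[OF assms(2)]
  have "{a i, b i, c i} = {a j, b j, c j}"
    using assms(3,4) A B by (auto simp: doubleton_eq_iff)
  with pne[OF assms(1,2) ij] show False by simp
qed


lemma w_in: "r < 3 \<Longrightarrow> w i r \<in> {a i, b i, c i}" using r3 by (auto simp: w_def)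

lemma w_cover: assumes "v \<in> {a i, b i, c i}" shows "\<exists>r<3. v = w i r"
proof -
  have "v = w i 0 \<or> v = w i 1 \<or> v = w i 2" using assms by auto
  moreover have "(0::nat) < 3" "(1::nat) < 3" "(2::nat) < 3" by auto
  ultimately show ?thesis by blast
qed

lemma w_inj: assumes "i < k" "j < k" "r < 3" "s < 3" "w i r = w j s" shows "i = j \<and> r = s"
proof -
  have "i = j" using same_idx[OF assms(1,2) w_in[OF assms(3)]] w_in[OF assms(4)] assms(5) by simp
  moreover then have "r = s" using mN[OF assms(1)] r3[OF assms(3)] r3[OF assms(4)] assms(5) by auto
  ultimately show ?thesis by simp
qed

lemma adj: assumes "i < k" "j < k" "r < 3" "s < 3" "(i, r) \<noteq> (j, s)" "\<not> (i = j \<and> (r = 1 \<or> s = 1))"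
  shows "arc (w i r) (w j s) \<or> arc (w j s) (w i r)"
proof -
  have ne: "w i r \<noteq> w j s" using w_inj[OF assms(1-4)] assms(5) by auto
  have nm: "\<not> missing V arc (w i r) (w j s)"
  proof
    assume "missing V arc (w i r) (w j s)"
    hence m: "w j s \<in> missN V arc (w i r)" using mis by simp
    show False
    proof (cases "i = j")
      case True
      then show ?thesis using m assms mN[OF assms(1)] r3[OF assms(3)] r3[OF assms(4)] by auto
    next
      case False
      have "missN V arc (w i r) \<subseteq> {a i, b i, c i}" using mN[OF assms(1)] r3[OF assms(3)] by auto
      then show ?thesis using m same_idx[OF assms(1,2)] w_in[OF assms(4)] False by blast
    qed
  qed
  then show ?thesis using ne wV assms unfolding missing_def by blast
qed

lemma nx_lt: "i < k \<Longrightarrow> nx i < k" using k2 by (simp add: nx_def)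
lemma nx_ne: "i < k \<Longrightarrow> nx i \<noteq> i" using k2 by (simp add: nx_def mod_if)

definition R :: "nat \<Rightarrow> nat \<Rightarrow> bool" where "R i j = arc (b i) (b j)"

lemma cons_raw:
  assumes i: "i < k"
  shows "(\<forall>r<3. \<forall>s<3. arc (w i r) (w (nx i) s) \<longleftrightarrow> (eps r = (eps s = R i (nx i))))
    \<and> (\<forall>r<3. \<forall>s<3. arc (w (nx i) s) (w i r) \<longrightarrow> (\<forall>z. arc (w i r) z \<longrightarrow> \<not> arc z (w (nx i) s)))"
proof -
  define j where "j = nx i"
  have j: "j < k" "i \<noteq> j" using nx_lt[OF i] nx_ne[OF i] by (auto simp: j_def)
  have P: "path_loses V arc (a i) (b i) (c i) (a j) (b j) (c j)" using pl[OF i] by (simp add: j_def)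
  have ad: "\<And>r s. r < 3 \<Longrightarrow> s < 3 \<Longrightarrow> arc (w i r) (w j s) \<or> arc (w j s) (w i r)"
    using adj[OF i j(1)] j(2) by auto
  have ad2: "\<And>u v. u \<in> {a i, b i, c i} \<Longrightarrow> v \<in> {a j, b j, c j} \<Longrightarrow> arc u v \<or> arc v u"
  proof -
    fix u v assume "u \<in> {a i, b i, c i}" "v \<in> {a j, b j, c j}"
    then obtain r s where "r < 3" "s < 3" "u = w i r" "v = w j s"
      using w_cover by metis
    then show "arc u v \<or> arc v u" using ad by blast
  qed
  have dI: "a i \<noteq> b i" "b i \<noteq> c i" "a i \<noteq> c i" using mN[OF i] by auto
  have dJ: "a j \<noteq> b j" "b j \<noteq> c j" "a j \<noteq> c j" using mN[OF j(1)] by auto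
  have dX: "\<And>u v. u \<in> {a i, b i, c i} \<Longrightarrow> v \<in> {a j, b j, c j} \<Longrightarrow> u \<noteq> v"
    using same_idx[OF i j(1)] j(2) by blast
  have L: "loses V arc e e'" if "e \<in> {{a i, b i}, {b i, c i}}" "e' \<in> {{a j, b j}, {b j, c j}}" for e e'
    using P that unfolding path_loses_def by blast
  have dd: "a i \<noteq> a j" "a i \<noteq> b j" "a i \<noteq> c j" "b i \<noteq> a j" "b i \<noteq> b j" "b i \<noteq> c j" "c i \<noteq> a j" "c i \<noteq> b j" "c i \<noteq> c j"
    by (rule dX; simp)+
  have aV': "\<And>u v. arc u v \<Longrightarrow> u \<in> V \<and> v \<in> V" using aV by blast
  have asy': "\<And>u v. arc u v \<Longrightarrow> \<not> arc v u" using asy by blast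
  have E1: "(arc (a i) (a j) \<longleftrightarrow> arc (b i) (b j)) \<and> (arc (a i) (a j) \<longleftrightarrow> \<not> arc (a i) (b j)) \<and> (arc (a i) (a j) \<longleftrightarrow> \<not> arc (b i) (a j))
     \<and> (\<forall>u\<in>{a i, b i}. \<forall>v\<in>{a j, b j}. arc v u \<longrightarrow> (\<forall>z. arc u z \<longrightarrow> \<not> arc z v))"
    apply (rule lose4[OF L[of "{a i, b i}" "{a j, b j}"] _ _ _ _ _ _ _ aV' asy'])
    apply (simp add: insert_commute)
    apply (simp add: insert_commute)
    using dI dJ dd apply simp_all
    using ad2 by blast
  have E2: "(arc (a i) (b j) \<longleftrightarrow> arc (b i) (c j)) \<and> (arc (a i) (b j) \<longleftrightarrow> \<not> arc (a i) (c j)) \<and> (arc (a i) (b j) \<longleftrightarrow> \<not> arc (b i) (b j))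
     \<and> (\<forall>u\<in>{a i, b i}. \<forall>v\<in>{b j, c j}. arc v u \<longrightarrow> (\<forall>z. arc u z \<longrightarrow> \<not> arc z v))"
    apply (rule lose4[OF L[of "{a i, b i}" "{b j, c j}"] _ _ _ _ _ _ _ aV' asy'])
    apply (simp add: insert_commute)
    apply (simp add: insert_commute)
    using dI dJ dd apply simp_all
    using ad2 by blast
  have E3: "(arc (c i) (a j) \<longleftrightarrow> arc (b i) (b j)) \<and> (arc (c i) (a j) \<longleftrightarrow> \<not> arc (c i) (b j)) \<and> (arc (c i) (a j) \<longleftrightarrow> \<not> arc (b i) (a j))
     \<and> (\<forall>u\<in>{c i, b i}. \<forall>v\<in>{a j, b j}. arc v u \<longrightarrow> (\<forall>z. arc u z \<longrightarrow> \<not> arc z v))"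
    apply (rule lose4[OF L[of "{c i, b i}" "{a j, b j}"] _ _ _ _ _ _ _ aV' asy'])
    apply (simp add: insert_commute)
    apply (simp add: insert_commute)
    using dI dJ dd apply simp_all
    using ad2 by blast
  have E4: "(arc (c i) (c j) \<longleftrightarrow> arc (b i) (b j)) \<and> (arc (c i) (c j) \<longleftrightarrow> \<not> arc (c i) (b j)) \<and> (arc (c i) (c j) \<longleftrightarrow> \<not> arc (b i) (c j))
     \<and> (\<forall>u\<in>{c i, b i}. \<forall>v\<in>{c j, b j}. arc v u \<longrightarrow> (\<forall>z. arc u z \<longrightarrow> \<not> arc z v))"
    apply (rule lose4[OF L[of "{c i, b i}" "{c j, b j}"] _ _ _ _ _ _ _ aV' asy'])
    apply (simp add: insert_commute)
    apply (simp add: insert_commute)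
    using dI dJ dd apply simp_all
    using ad2 by blast
  define B where "B = arc (b i) (b j)"
  have e: "arc (a i) (a j) = B" "arc (a i) (b j) = (\<not> B)" "arc (b i) (a j) = (\<not> B)"
     "arc (b i) (c j) = (\<not> B)" "arc (a i) (c j) = B" "arc (c i) (a j) = B"
     "arc (c i) (b j) = (\<not> B)" "arc (c i) (c j) = B" "arc (b i) (b j) = B"
    unfolding B_def using E1 E2 E3 E4 by blast+
  have C1: "arc (w i r) (w j s) \<longleftrightarrow> (eps r = (eps s = R i j))" if "r < 3" "s < 3" for r s
  proof -
    have "R i j = B" by (simp add: R_def B_def)
    then show ?thesis using r3[OF that(1)] r3[OF that(2)] e by (elim disjE) (simp_all add: eps_def)
  qed
  have F1: "\<forall>u\<in>{a i, b i}. \<forall>v\<in>{a j, b j}. arc v u \<longrightarrow> (\<forall>z. arc u z \<longrightarrow> \<not> arc z v)" using E1 by blast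
  have F2: "\<forall>u\<in>{a i, b i}. \<forall>v\<in>{b j, c j}. arc v u \<longrightarrow> (\<forall>z. arc u z \<longrightarrow> \<not> arc z v)" using E2 by blast
  have F3: "\<forall>u\<in>{c i, b i}. \<forall>v\<in>{a j, b j}. arc v u \<longrightarrow> (\<forall>z. arc u z \<longrightarrow> \<not> arc z v)" using E3 by blast
  have F4: "\<forall>u\<in>{c i, b i}. \<forall>v\<in>{c j, b j}. arc v u \<longrightarrow> (\<forall>z. arc u z \<longrightarrow> \<not> arc z v)" using E4 by blast
  have C2: "\<forall>z. arc (w i r) z \<longrightarrow> \<not> arc z (w j s)" if "r < 3" "s < 3" "arc (w j s) (w i r)" for r s
  proof -
    have hr: "w i r \<in> {a i, b i} \<or> w i r \<in> {c i, b i}" using r3[OF that(1)] by auto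
    have hs: "w j s \<in> {a j, b j} \<or> w j s \<in> {c j, b j}" using r3[OF that(2)] by auto
    have F4': "\<forall>u\<in>{c i, b i}. \<forall>v\<in>{b j, c j}. arc v u \<longrightarrow> (\<forall>z. arc u z \<longrightarrow> \<not> arc z v)"
      using F4 by (simp add: insert_commute)
    have hs': "w j s \<in> {a j, b j} \<or> w j s \<in> {b j, c j}" using hs by blast
    from hr hs' show ?thesis
    proof (elim disjE)
      assume "w i r \<in> {a i, b i}" "w j s \<in> {a j, b j}" then show ?thesis using F1 that(3) by blast
    next
      assume "w i r \<in> {a i, b i}" "w j s \<in> {b j, c j}" then show ?thesis using F2 that(3) by blast
    next
      assume "w i r \<in> {c i, b i}" "w j s \<in> {a j, b j}" then show ?thesis using F3 that(3) by blast
    next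
      assume "w i r \<in> {c i, b i}" "w j s \<in> {b j, c j}" then show ?thesis using F4' that(3) by blast
    qed
  qed
  show ?thesis using C1 C2 by (simp add: j_def)
qed


lemma cons: "i < k \<Longrightarrow> r < 3 \<Longrightarrow> s < 3 \<Longrightarrow> arc (w i r) (w (nx i) s) \<longleftrightarrow> (eps r = (eps s = R i (nx i)))"
  using cons_raw by blast

lemma nbr: "i < k \<Longrightarrow> r < 3 \<Longrightarrow> s < 3 \<Longrightarrow> arc (w (nx i) s) (w i r) \<Longrightarrow> arc (w i r) z \<Longrightarrow> \<not> arc z (w (nx i) s)"
  using cons_raw by blast

lemma arc_iff: "i < k \<Longrightarrow> j < k \<Longrightarrow> i \<noteq> j \<Longrightarrow> r < 3 \<Longrightarrow> s < 3 \<Longrightarrow>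
   arc (w j s) (w i r) \<longleftrightarrow> \<not> arc (w i r) (w j s)"
  using adj[of i j r s] asy by auto

lemma idx: "j < k \<Longrightarrow> 0 < m \<Longrightarrow> m < k \<Longrightarrow> (j + m) mod k \<noteq> j"
  by (cases "j + m < k") (auto simp: mod_if)

lemma idx_lt: "(j + m) mod k < k" using k2 by simp

lemma nxm: "nx ((j + m) mod k) = (j + Suc m) mod k"
  by (simp add: nx_def mod_Suc_eq)

lemma s0: "\<exists>s0<3. eps s0 = \<phi>"
proof (cases \<phi>)
  case True then show ?thesis by (intro exI[of _ 0]) (simp add: eps_def)
next
  case False then show ?thesis by (intro exI[of _ 1]) (simp add: eps_def)
qed

lemma fwd: assumes j: "j < k" and r0: "r0 < 3"
  shows "1 \<le> m \<Longrightarrow> m < k \<Longrightarrow> \<exists>\<phi>. \<forall>s<3. eps s = \<phi> \<longrightarrow> arc (w ((j + m) mod k) s) (w j r0)"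
proof (induction m)
  case 0 then show ?case by simp
next
  case (Suc m)
  show ?case
  proof (cases "m = 0")
    case True
    have e: "(j + Suc m) mod k = nx j" using True by (simp add: nx_def)
    have nj: "nx j \<noteq> j" "nx j < k" using nx_ne nx_lt j by auto
    show ?thesis
    proof (rule exI[of _ "R j (nx j) = (\<not> eps r0)"], intro allI impI)
      fix s assume s: "s < 3" "eps s = (R j (nx j) = (\<not> eps r0))"
      have "\<not> arc (w j r0) (w (nx j) s)" using cons[OF j r0 s(1)] s(2) by auto
      then show "arc (w ((j + Suc m) mod k) s) (w j r0)" unfolding e using arc_iff[OF j nj(2) nj(1)[symmetric] r0 s(1)] by simp
    qed
  next
    case False
    define i where "i = (j + m) mod k"
    have i: "i < k" "i \<noteq> j" using idx[OF j, of m] False Suc.prems by (auto simp: i_def)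
    obtain \<phi> where ph: "\<forall>s<3. eps s = \<phi> \<longrightarrow> arc (w i s) (w j r0)" using Suc False by (auto simp: i_def)
    obtain s0 where s0: "s0 < 3" "eps s0 = \<phi>" using s0 by blast
    have x: "arc (w i s0) (w j r0)" using ph s0 by blast
    have e: "(j + Suc m) mod k = nx i" by (simp add: i_def nxm)
    have ni: "nx i \<noteq> i" "nx i < k" using nx_ne nx_lt i by auto
    have nij: "nx i \<noteq> j" using idx[OF j, of "Suc m"] Suc.prems e by auto
    show ?thesis
    proof (rule exI[of _ "R i (nx i) = (\<not> \<phi>)"], intro allI impI)
      fix s assume s: "s < 3" "eps s = (R i (nx i) = (\<not> \<phi>))"
      have "\<not> arc (w i s0) (w (nx i) s)" using cons[OF i(1) s0(1) s(1)] s(2) s0(2) by auto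
      hence q: "arc (w (nx i) s) (w i s0)" using arc_iff[OF ni(2) i(1) ni(1) s(1) s0(1)] by simp
      have "\<not> arc (w j r0) (w (nx i) s)" using nbr[OF i(1) s0(1) s(1) q x] .
      then show "arc (w ((j + Suc m) mod k) s) (w j r0)" unfolding e
        using arc_iff[OF j ni(2) nij[symmetric] r0 s(1)] by simp
    qed
  qed
qed

lemma bwd: assumes j: "j < k" and r0: "r0 < 3"
  shows "n < k - 1 \<Longrightarrow> \<exists>\<psi>. \<forall>s<3. eps s = \<psi> \<longrightarrow> arc (w j r0) (w ((j + (k - 1 - n)) mod k) s)"
proof (induction n)
  case 0
  define i where "i = (j + (k - 1)) mod k"
  have i: "i < k" "i \<noteq> j" using idx[OF j, of "k - 1"] k2 by (auto simp: i_def)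
  have e: "nx i = j" using nxm[of j "k - 1"] k2 j by (simp add: i_def)
  show ?case
  proof (rule exI[of _ "\<not> (eps r0 = R i (nx i))"], intro allI impI)
    fix s assume s: "s < 3" "eps s = (\<not> (eps r0 = R i (nx i)))"
    have "\<not> arc (w i s) (w (nx i) r0)" using cons[OF i(1) s(1) r0] s(2) by auto
    then show "arc (w j r0) (w ((j + (k - 1 - 0)) mod k) s)"
      using arc_iff[OF i(1) j i(2) s(1) r0] e by (simp add: i_def)
  qed
next
  case (Suc n)
  define m where "m = k - 1 - Suc n"
  define i where "i = (j + m) mod k"
  have m: "0 < m" "m < k" "Suc m = k - 1 - n" using Suc.prems by (auto simp: m_def)
  have i: "i < k" "i \<noteq> j" using idx[OF j m(1,2)] k2 by (auto simp: i_def)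
  have e: "nx i = (j + (k - 1 - n)) mod k" using nxm[of j m] m(3) by (simp add: i_def)
  have ni: "nx i \<noteq> i" "nx i < k" using nx_ne nx_lt i by auto
  obtain \<psi> where ps: "\<forall>s<3. eps s = \<psi> \<longrightarrow> arc (w j r0) (w (nx i) s)" using Suc e by auto
  obtain s0 where s0: "s0 < 3" "eps s0 = \<psi>" using s0 by blast
  have y: "arc (w j r0) (w (nx i) s0)" using ps s0 by blast
  show ?case
  proof (rule exI[of _ "\<not> (\<psi> = R i (nx i))"], intro allI impI)
    fix s assume s: "s < 3" "eps s = (\<not> (\<psi> = R i (nx i)))"
    have "\<not> arc (w i s) (w (nx i) s0)" using cons[OF i(1) s(1) s0(1)] s(2) s0(2) by auto
    hence q: "arc (w (nx i) s0) (w i s)" using arc_iff[OF i(1) ni(2) ni(1)[symmetric] s(1) s0(1)] by simp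
    have "\<not> arc (w i s) (w j r0)" using nbr[OF i(1) s(1) s0(1) q] y by blast
    then show "arc (w j r0) (w ((j + (k - 1 - Suc n)) mod k) s)"
      using arc_iff[OF i(1) j i(2) s(1) r0] by (simp add: i_def m_def)
  qed
qed

lemma H: assumes j: "j < k" and r0: "r0 < 3" and i: "i < k" "i \<noteq> j"
  shows "\<exists>\<phi>. \<forall>s<3. arc (w i s) (w j r0) \<longleftrightarrow> eps s = \<phi>"
proof -
  define m where "m = (if j \<le> i then i - j else i + k - j)"
  have m: "1 \<le> m" "m < k" "(j + m) mod k = i" using i j by (auto simp: m_def)
  obtain \<phi> where ph: "\<forall>s<3. eps s = \<phi> \<longrightarrow> arc (w i s) (w j r0)" using fwd[OF j r0 m(1,2)] m(3) by auto
  have n: "k - 1 - (k - 1 - m) = m" "k - 1 - m < k - 1" using m by auto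
  obtain \<psi> where ps: "\<forall>s<3. eps s = \<psi> \<longrightarrow> arc (w j r0) (w i s)" using bwd[OF j r0 n(2)] n(1) m(3) by auto
  have d: "\<psi> = (\<not> \<phi>)"
  proof (rule ccontr)
    assume "\<psi> \<noteq> (\<not> \<phi>)"
    hence "\<psi> = \<phi>" by blast
    obtain s0 where "s0 < 3" "eps s0 = \<phi>" using s0 by blast
    then show False using ph ps \<open>\<psi> = \<phi>\<close> asy by blast
  qed
  show ?thesis
  proof (rule exI[of _ \<phi>], intro allI impI)
    fix s :: nat assume s: "s < 3"
    show "arc (w i s) (w j r0) \<longleftrightarrow> eps s = \<phi>"
      using ph ps d s asy by blast
  qed
qed

lemma HOM: assumes "i < k" "j < k" "i \<noteq> j" "r < 3" "s < 3"
  shows "arc (w i r) (w j s) \<longleftrightarrow> (eps r = (eps s = R i j))"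
proof -
  obtain \<phi>1 where p1: "\<forall>r'<3. arc (w i r') (w j s) \<longleftrightarrow> eps r' = \<phi>1" using H[OF assms(2,5,1,3)] by blast
  obtain \<phi>2 where p2: "\<forall>s'<3. arc (w j s') (w i 1) \<longleftrightarrow> eps s' = \<phi>2" using H[OF assms(1) _ assms(2) assms(3)[symmetric], of 1] by auto
  have e1: "eps 1 = False" by (simp add: eps_def)
  have a1: "arc (b i) (w j s) \<longleftrightarrow> \<not> \<phi>1" using p1 e1 by (metis w_simps(2) less_numeral_extra(1) one_less_numeral_iff semiring_norm(77))
  have a2: "arc (w j s) (b i) \<longleftrightarrow> eps s = \<phi>2" using p2 assms(5) by simp
  have a3: "arc (b j) (b i) \<longleftrightarrow> \<not> \<phi>2" using p2 e1 by (metis w_simps(2) less_numeral_extra(1) one_less_numeral_iff semiring_norm(77))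
  have one: "(1::nat) < 3" by simp
  have b1: "arc (b i) (w j s) \<longleftrightarrow> \<not> arc (w j s) (b i)" using arc_iff[OF assms(2,1) assms(3)[symmetric] assms(5) one] by simp
  have b2: "arc (b i) (b j) \<longleftrightarrow> \<not> arc (b j) (b i)" using arc_iff[OF assms(2,1) assms(3)[symmetric] one one] by simp
  have "\<phi>1 = (eps s = R i j)" using a1 a2 a3 b1 b2 unfolding R_def by blast
  then show ?thesis using p1 assms(4) by simp
qed

lemma Rtour: "i < k \<Longrightarrow> j < k \<Longrightarrow> i \<noteq> j \<Longrightarrow> R i j \<or> R j i"
  using adj[of i j 1 1] by (simp add: R_def)

lemma Rasy: "R i j \<Longrightarrow> \<not> R j i" using asy by (simp add: R_def)

definition Oset :: "nat \<Rightarrow> nat set" where "Oset t = {j. j < k \<and> j \<noteq> t \<and> R t j}"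
definition Iset :: "nat \<Rightarrow> nat set" where "Iset t = {j. j < k \<and> j \<noteq> t \<and> R j t}"

lemma tour: "\<exists>t<k. card (Iset t) \<le> card (Oset t)"
proof (rule ccontr)
  assume "\<not> ?thesis"
  hence lt: "\<forall>t\<in>{..<k}. card (Oset t) < card (Iset t)" by auto
  have "0 \<in> {..<k}" using k2 by auto
  hence ne: "{..<k} \<noteq> {}" by blast
  have "(\<Sum>t\<in>{..<k}. card (Oset t)) < (\<Sum>t\<in>{..<k}. card (Iset t))"
    by (rule sum_strict_mono[OF _ ne]) (use lt in auto)
  moreover have "(\<Sum>t\<in>{..<k}. card (Oset t)) = card (SIGMA t:{..<k}. Oset t)"
    by (rule card_SigmaI[symmetric]) (auto simp: Oset_def)
  moreover have "(\<Sum>t\<in>{..<k}. card (Iset t)) = card (SIGMA t:{..<k}. Iset t)"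
    by (rule card_SigmaI[symmetric]) (auto simp: Iset_def)
  moreover have "(SIGMA t:{..<k}. Iset t) = prod.swap ` (SIGMA t:{..<k}. Oset t)"
    by (auto simp: Iset_def Oset_def image_iff)
  moreover have "card (prod.swap ` (SIGMA t:{..<k}. Oset t)) = card (SIGMA t:{..<k}. Oset t)"
    by (rule card_image) (simp add: inj_on_def)
  ultimately show False by simp
qed

definition Idx :: "(nat \<times> nat) set" where "Idx = {..<k} \<times> {..<3}"
definition W :: "nat \<times> nat \<Rightarrow> 'a" where "W p = w (fst p) (snd p)"

lemma K_eq: "KC k a b c = W ` Idx"
proof (rule set_eqI)
  fix x
  show "x \<in> KC k a b c \<longleftrightarrow> x \<in> W ` Idx"
  proof
    assume "x \<in> KC k a b c"
    then obtain i where i: "i < k" "x \<in> {a i, b i, c i}" unfolding KC_def by auto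
    then obtain r where "r < 3" "x = w i r" using w_cover by blast
    then show "x \<in> W ` Idx" using i unfolding Idx_def W_def by force
  next
    assume "x \<in> W ` Idx"
    then obtain i r where "i < k" "r < 3" "x = w i r" unfolding Idx_def W_def by auto
    then show "x \<in> KC k a b c" unfolding KC_def using w_in by blast
  qed
qed

lemma W_inj: "inj_on W Idx"
  unfolding inj_on_def Idx_def W_def using w_inj by auto

lemma finIdx: "finite Idx" by (simp add: Idx_def)

lemma sub_img: "{x \<in> W ` Idx. P x} = W ` {p \<in> Idx. P (W p)}" by auto

lemma count: assumes t: "t < k" and ge: "card (Iset t) \<le> card (Oset t)"
  shows "card (outN arc (KC k a b c) (b t)) \<le> card (outN2 arc (KC k a b c) (b t))"
proof -
  define K where "K = KC k a b c"
  define Os where "Os = Oset t"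
  define Is where "Is = Iset t"
  define X where "X = {p \<in> Idx. arc (b t) (W p)}"
  define Z where "Z = {p \<in> Idx. W p \<in> outN2 arc K (b t)}"
  have finO: "finite Os" "finite Is" by (auto simp: Os_def Is_def Oset_def Iset_def)
  have ge': "card Is \<le> card Os" using ge by (simp add: Os_def Is_def)
  have OI: "Os \<inter> Is = {}" using Rasy by (auto simp: Os_def Is_def Oset_def Iset_def)
  have tO: "t \<notin> Os" "t \<notin> Is" by (auto simp: Os_def Is_def Oset_def Iset_def)
  have inO: "\<And>j. j \<in> Os \<longleftrightarrow> j < k \<and> j \<noteq> t \<and> R t j" by (simp add: Os_def Oset_def)
  have inI: "\<And>j. j \<in> Is \<longleftrightarrow> j < k \<and> j \<noteq> t \<and> R j t" by (simp add: Is_def Iset_def)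
  have one: "(1::nat) < 3" "(0::nat) < 3" "(2::nat) < 3" by auto
  have bt: "b t = w t 1" by simp
  have outeq: "outN arc K (b t) = W ` X"
    unfolding outN_def K_def K_eq X_def by (rule sub_img)
  have cX: "card (outN arc K (b t)) = card X"
    unfolding outeq by (rule card_image, rule inj_on_subset[OF W_inj]) (auto simp: X_def)
  have Xeq: "X = Os \<times> {1} \<union> Is \<times> {0, 2}"
  proof (rule set_eqI)
    fix p :: "nat \<times> nat"
    obtain j r where p: "p = (j, r)" by (cases p)
    have "(j, r) \<in> X \<longleftrightarrow> (j, r) \<in> Os \<times> {1} \<union> Is \<times> {0, 2}"
    proof (cases "j < k \<and> r < 3")
      case False
      have "(j, r) \<notin> X" using False by (auto simp: X_def Idx_def)
      moreover have "(j, r) \<notin> Os \<times> {1} \<union> Is \<times> {0, 2}" using False by (auto simp: inO inI)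
      ultimately show ?thesis by blast
    next
      case True
      show ?thesis
      proof (cases "j = t")
        case jt: True
        have rr: "r = 0 \<or> r = 1 \<or> r = 2" using True r3 by blast
        have "\<not> arc (b t) (w t r)" using rr noarc[OF t] irr[of "b t"] by (elim disjE) simp_all
        hence "(j, r) \<notin> X" using jt by (simp add: X_def Idx_def W_def)
        moreover have "(j, r) \<notin> Os \<times> {1} \<union> Is \<times> {0, 2}" using jt tO by blast
        ultimately show ?thesis by blast
      next
        case jt: False
        have jk: "j < k" "r < 3" using True by auto
        have h: "arc (b t) (w j r) \<longleftrightarrow> (False = (eps r = R t j))"
          using HOM[OF t jk(1) jt[symmetric] one(1) jk(2)] by (simp add: eps_def)
        have tj: "R t j \<longleftrightarrow> \<not> R j t" using Rtour[OF t jk(1) jt[symmetric]] Rasy by blast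
        have xm: "(j, r) \<in> X \<longleftrightarrow> arc (b t) (w j r)" using True by (simp add: X_def Idx_def W_def)
        have rm: "(j, r) \<in> Os \<times> {1} \<union> Is \<times> {0, 2} \<longleftrightarrow> (r = 1 \<and> R t j) \<or> ((r = 0 \<or> r = 2) \<and> R j t)"
          using True jt by (auto simp: inO inI)
        have "arc (b t) (w j r) \<longleftrightarrow> (r = 1 \<and> R t j) \<or> ((r = 0 \<or> r = 2) \<and> R j t)"
          using r3[OF jk(2)]
        proof (elim disjE)
          assume "r = 0" then show ?thesis using h tj by (simp add: eps_def)
        next
          assume "r = 1" then show ?thesis using h tj by (simp add: eps_def)
        next
          assume "r = 2" then show ?thesis using h tj by (simp add: eps_def)
        qed
        then show ?thesis using xm rm by simp
      qed
    qed
    then show "p \<in> X \<longleftrightarrow> p \<in> Os \<times> {1} \<union> Is \<times> {0, 2}" using p by simp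
  qed
  have cXv: "card X = card Os + 2 * card Is"
  proof -
    have "card X = card (Os \<times> {1::nat}) + card (Is \<times> {0::nat, 2})"
      unfolding Xeq by (rule card_Un_disjoint) (use finO in auto)
    then show ?thesis by (simp add: card_cartesian_product)
  qed
  have o2eq: "outN2 arc K (b t) = W ` Z"
  proof -
    have "outN2 arc K (b t) = {x \<in> W ` Idx. x \<in> outN2 arc K (b t)}"
      unfolding outN2_def K_def K_eq by auto
    then show ?thesis unfolding Z_def by (simp add: sub_img)
  qed
  have cZ: "card (outN2 arc K (b t)) = card Z"
    unfolding o2eq by (rule card_image, rule inj_on_subset[OF W_inj]) (auto simp: Z_def)
  have finZ: "finite Z" using finIdx by (simp add: Z_def)
  have inZ: "(j, r) \<in> Z" if "j < k" "r < 3" "\<not> arc (b t) (w j r)" "w j r \<noteq> b t"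
      "l < k" "s < 3" "arc (b t) (w l s)" "arc (w l s) (w j r)" for j r l s
  proof -
    have "w l s \<in> outN arc K (b t)" unfolding outN_def K_def K_eq Idx_def W_def using that by force
    moreover have "w j r \<in> K" unfolding K_def K_eq Idx_def W_def using that by force
    ultimately have "w j r \<in> outN2 arc K (b t)" unfolding outN2_def outN_def using that by blast
    then show ?thesis using that by (simp add: Z_def Idx_def W_def)
  qed
  define Os' where "Os' = {j \<in> Os. \<exists>l. (l \<in> Os \<and> l \<noteq> j \<and> R j l) \<or> (l \<in> Is \<and> R l j)}"
  define Is' where "Is' = {j \<in> Is. \<exists>l. (l \<in> Os \<and> R l j) \<or> (l \<in> Is \<and> l \<noteq> j \<and> R j l)}"
  define Y :: "(nat \<times> nat) set" where "Y = {(t, 0), (t, 2)} \<union> (Os' \<times> {0, 2} \<union> Is' \<times> {1})"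
  have Onz: "Os \<noteq> {}"
  proof
    assume "Os = {}"
    hence "Is = {}" using ge' finO by simp
    define t' :: nat where "t' = (if t = 0 then 1 else 0)"
    have "t' < k" "t' \<noteq> t" using k2 by (auto simp: t'_def)
    have "R t t' \<or> R t' t" using Rtour[OF t \<open>t' < k\<close>] \<open>t' \<noteq> t\<close> by auto
    hence "t' \<in> Os \<or> t' \<in> Is" using \<open>t' < k\<close> \<open>t' \<noteq> t\<close> by (simp add: inO inI)
    then show False using \<open>Os = {}\<close> \<open>Is = {}\<close> by blast
  qed
  then obtain j0 where j0: "j0 \<in> Os" by blast
  have j0': "j0 < k" "j0 \<noteq> t" "R t j0" using j0 by (auto simp: inO)
  have YZ: "Y \<subseteq> Z"
  proof
    fix p assume "p \<in> Y"
    then consider "p = (t, 0)" | "p = (t, 2)" | j r where "p = (j, r)" "j \<in> Os'" "r \<in> {0, 2}"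
      | j where "p = (j, 1)" "j \<in> Is'" unfolding Y_def by blast
    then show "p \<in> Z"
    proof cases
      case 1
      have "arc (w j0 1) (w t 0)" using HOM[OF j0'(1) t j0'(2) one(1) one(2)] j0'(3) Rasy by (auto simp: eps_def)
      then show ?thesis unfolding 1
        using inZ[OF t one(2) _ _ j0'(1) one(1)] noarc[OF t] mN[OF t] j0'(3) by (auto simp: R_def)
    next
      case 2
      have "arc (w j0 1) (w t 2)" using HOM[OF j0'(1) t j0'(2) one(1) one(3)] j0'(3) Rasy by (auto simp: eps_def)
      then show ?thesis unfolding 2
        using inZ[OF t one(3) _ _ j0'(1) one(1)] noarc[OF t] mN[OF t] j0'(3) by (auto simp: R_def)
    next
      case (3 j r)
      have j: "j < k" "j \<noteq> t" "R t j" using 3 by (auto simp: Os'_def inO)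
      have r: "r < 3" "eps r" using 3 by (auto simp: eps_def)
      have na: "\<not> arc (b t) (w j r)" using HOM[OF t j(1) j(2)[symmetric] one(1) r(1)] j(3) r(2) by (simp add: eps_def)
      have ne: "w j r \<noteq> b t" using w_inj[OF j(1) t r(1) one(1)] j(2) by auto
      obtain l where l: "(l \<in> Os \<and> l \<noteq> j \<and> R j l) \<or> (l \<in> Is \<and> R l j)" using 3 by (auto simp: Os'_def)
      then show ?thesis
      proof
        assume l: "l \<in> Os \<and> l \<noteq> j \<and> R j l"
        have l': "l < k" "l \<noteq> t" "R t l" using l by (auto simp: inO)
        have "arc (w l 1) (w j r)" using HOM[OF l'(1) j(1) _ one(1) r(1)] l r(2) Rasy by (auto simp: eps_def)
        moreover have "arc (b t) (w l 1)" using l'(3) by (simp add: R_def)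
        ultimately show ?thesis unfolding 3 using inZ[OF j(1) r(1) na ne l'(1) one(1)] by simp
      next
        assume l: "l \<in> Is \<and> R l j"
        have l': "l < k" "l \<noteq> t" "R l t" using l by (auto simp: inI)
        have "j \<in> Os" using 3 by (auto simp: Os'_def)
        hence lj: "l \<noteq> j" using l OI by blast
        have "arc (w l 0) (w j r)" using HOM[OF l'(1) j(1) lj one(2) r(1)] l r(2) by (auto simp: eps_def)
        moreover have "arc (b t) (w l 0)" using HOM[OF t l'(1) l'(2)[symmetric] one(1) one(2)] l'(3) Rasy by (auto simp: eps_def)
        ultimately show ?thesis unfolding 3 using inZ[OF j(1) r(1) na ne l'(1) one(2)] by simp
      qed
    next
      case (4 j)
      have j: "j < k" "j \<noteq> t" "R j t" using 4 by (auto simp: Is'_def inI)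
      have na: "\<not> arc (b t) (w j 1)" using j(3) Rasy by (simp add: R_def)
      have ne: "w j 1 \<noteq> b t" using w_inj[OF j(1) t one(1) one(1)] j(2) by auto
      obtain l where l: "(l \<in> Os \<and> R l j) \<or> (l \<in> Is \<and> l \<noteq> j \<and> R j l)" using 4 by (auto simp: Is'_def)
      then show ?thesis
      proof
        assume l: "l \<in> Os \<and> R l j"
        have l': "l < k" "l \<noteq> t" "R t l" using l by (auto simp: inO)
        have "arc (w l 1) (w j 1)" using l by (simp add: R_def)
        moreover have "arc (b t) (w l 1)" using l'(3) by (simp add: R_def)
        ultimately show ?thesis unfolding 4 using inZ[OF j(1) one(1) na ne l'(1) one(1)] by simp
      next
        assume l: "l \<in> Is \<and> l \<noteq> j \<and> R j l"
        have l': "l < k" "l \<noteq> t" "R l t" using l by (auto simp: inI)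
        have "arc (w l 0) (w j 1)" using HOM[OF l'(1) j(1) _ one(2) one(1)] l Rasy by (auto simp: eps_def)
        moreover have "arc (b t) (w l 0)" using HOM[OF t l'(1) l'(2)[symmetric] one(1) one(2)] l'(3) Rasy by (auto simp: eps_def)
        ultimately show ?thesis unfolding 4 using inZ[OF j(1) one(1) na ne l'(1) one(2)] by simp
      qed
    qed
  qed
  have Os'Os: "Os' \<subseteq> Os" "Is' \<subseteq> Is" by (auto simp: Os'_def Is'_def)
  have finO': "finite Os'" "finite Is'" using Os'Os finO finite_subset by blast+
  have cY: "card Y = 2 + 2 * card Os' + card Is'"
  proof -
    have d1: "{(t, 0::nat), (t, 2)} \<inter> (Os' \<times> {0, 2} \<union> Is' \<times> {1}) = {}" using Os'Os tO by auto
    have "card Y = card {(t, 0::nat), (t, 2)} + card (Os' \<times> {0::nat, 2} \<union> Is' \<times> {1})"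
      unfolding Y_def by (rule card_Un_disjoint) (use finO' d1 in auto)
    also have "card (Os' \<times> {0::nat, 2} \<union> Is' \<times> {1}) = card (Os' \<times> {0::nat, 2}) + card (Is' \<times> {1::nat})"
      by (rule card_Un_disjoint) (use finO' in auto)
    finally show ?thesis by (simp add: card_cartesian_product)
  qed
  have EO: "card (Os - Os') \<le> 1"
  proof -
    have "\<forall>j1\<in>Os - Os'. \<forall>j2\<in>Os - Os'. j1 = j2"
    proof (intro ballI, rule ccontr)
      fix j1 j2 assume a: "j1 \<in> Os - Os'" "j2 \<in> Os - Os'" "j1 \<noteq> j2"
      have "R j1 j2 \<or> R j2 j1" using Rtour[of j1 j2] a by (auto simp: inO)
      then show False using a by (auto simp: Os'_def)
    qed
    then show ?thesis using card_le_Suc0_iff_eq[of "Os - Os'"] finO by auto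
  qed
  have EI: "card (Is - Is') \<le> 1"
  proof -
    have "\<forall>j1\<in>Is - Is'. \<forall>j2\<in>Is - Is'. j1 = j2"
    proof (intro ballI, rule ccontr)
      fix j1 j2 assume a: "j1 \<in> Is - Is'" "j2 \<in> Is - Is'" "j1 \<noteq> j2"
      have "R j1 j2 \<or> R j2 j1" using Rtour[of j1 j2] a by (auto simp: inI)
      then show False using a by (auto simp: Is'_def)
    qed
    then show ?thesis using card_le_Suc0_iff_eq[of "Is - Is'"] finO by auto
  qed
  have EOI: "Os - Os' = {} \<or> Is - Is' = {}"
  proof (rule ccontr)
    assume "\<not> ?thesis"
    then obtain j1 j2 where a: "j1 \<in> Os - Os'" "j2 \<in> Is - Is'" by blast
    have "j1 \<noteq> j2" using a OI by blast
    hence "R j1 j2 \<or> R j2 j1" using Rtour[of j1 j2] a by (auto simp: inO inI)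
    then show False using a by (auto simp: Os'_def Is'_def)
  qed
  have c1: "card Os = card Os' + card (Os - Os')" using card_Diff_subset[OF finO'(1) Os'Os(1)] card_mono[OF finO(1) Os'Os(1)] by simp
  have c2: "card Is = card Is' + card (Is - Is')" using card_Diff_subset[OF finO'(2) Os'Os(2)] card_mono[OF finO(2) Os'Os(2)] by simp
  have c3: "card (Os - Os') = 0 \<or> card (Is - Is') = 0" using EOI by (metis card.empty)
  have "card Y \<le> card Z" using card_mono[OF finZ YZ] .
  then have "card X \<le> card Z" using cXv cY c1 c2 c3 EO EI ge' by linarith
  then show ?thesis using cX cZ by (simp add: K_def)
qed

end

theorem proposition4p12:
  fixes V :: "'a set" and arc :: "'a \<Rightarrow> 'a \<Rightarrow> bool"
    and k :: nat and a b c :: "nat \<Rightarrow> 'a"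
  assumes "tournament_missing_P2 V arc"
    and "double_cycle V arc k a b c"
  shows "\<exists>t < k. card (outN arc (KC k a b c) (b t)) \<le> card (outN2 arc (KC k a b c) (b t))"
proof -
  interpret DC V arc k a b c using assms by unfold_locales
  obtain t where "t < k" "card (Iset t) \<le> card (Oset t)" using tour by blast
  then show ?thesis using count by blast
qed

end
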